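(* Let $E\subseteq E'\subseteq\binom{[n]}{2}$ and $K\in\mathbb{N}^{E'}$. If there exists $F\in W^K_{E,|E'|}$ with $\langle F,Q_{E'}\rangle\neq0$, then there exists $F'\in W^K_{E,|E|}$ with $\langle F',Q_E\rangle\neq0$.
   Context: $[n]=\{1,\dots,n\}$ and $\binom{[n]}{2}$ is the set of $2$-subsets of $[n]$. For a finite set $S$, $\mathbb{N}^S$ is the set of maps $S\to\mathbb{N}$, $\mathbb{N}^S_m=\{K\in\mathbb{N}^S:\sum_sK(s)=m\}$, $K!=\prod_sK(s)!$, and $K'\le K$ means pointwise inequality (maps on $E$ are compared with maps on $E'$ by extending by $0$). In $\mathbb{C}[x_1,\dots,x_n]$ define, for a set $E$ of $2$-subsets, $Q_E=\prod_{\{i,j\}\in E,\ i<j}(x_i-x_j)$ and for $K\in\mathbb{N}^E$, $H_E^K=\prod_{\{i,j\}\in E,\ i<j}(x_i+x_j)^{K(\{i,j\})}$. For $K\in\mathbb{N}^{E'}$ and $m\in\mathbb{N}$, $W^K_{E,m}$ is the complex linear span of $\{H_E^{K'}:K'\in\mathbb{N}^E_m,\ K'\le K\}$. On homogeneous polynomials of degree $m$ define $\langle f,g\rangle=\sum_{K\in\mathbb{N}^n_m}K!\,\mathrm{coe}(x^K,f)\overline{\mathrm{coe}(x^K,g)}$, where $x^K=\prod_ix_i^{K(i)}$ and $\mathrm{coe}(x^K,f)$ is the coefficient of $x^K$ in $f$. *)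

theory Defs
  imports Complex_Main "HOL-Library.Poly_Mapping"
begin

text \<open>Polynomials in C[x_1,...,x_n]: finitely supported maps from exponent
vectors (nat =>0 nat, variable index |-> exponent) to complex coefficients.\<close>
type_synonym cpoly = "(nat \<Rightarrow>\<^sub>0 nat) \<Rightarrow>\<^sub>0 complex"

definition Xv :: "nat \<Rightarrow> cpoly" where
  "Xv i = Poly_Mapping.single (Poly_Mapping.single i 1) 1"

definition cconst :: "complex \<Rightarrow> cpoly" where
  "cconst c = Poly_Mapping.single 0 c"

definition pairs :: "nat \<Rightarrow> nat set set" where
  "pairs n = {e. \<exists>i j. 1 \<le> i \<and> i < j \<and> j \<le> n \<and> e = {i, j}}"

definition Q :: "nat set set \<Rightarrow> cpoly" where
  "Q E = (\<Prod>e\<in>E. Xv (Min e) - Xv (Max e))"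

definition H :: "nat set set \<Rightarrow> (nat set \<Rightarrow> nat) \<Rightarrow> cpoly" where
  "H E K = (\<Prod>e\<in>E. (Xv (Min e) + Xv (Max e)) ^ K e)"

text \<open>Admissible exponent maps K' in N^E_m with K' <= K (maps on E are
extended by 0 outside E).\<close>
definition admissible :: "nat set set \<Rightarrow> (nat set \<Rightarrow> nat) \<Rightarrow> nat \<Rightarrow> (nat set \<Rightarrow> nat) set" where
  "admissible E K m = {K'. (\<forall>e. e \<notin> E \<longrightarrow> K' e = 0) \<and> (\<forall>e\<in>E. K' e \<le> K e) \<and> (\<Sum>e\<in>E. K' e) = m}"

definition W :: "(nat set \<Rightarrow> nat) \<Rightarrow> nat set set \<Rightarrow> nat \<Rightarrow> cpoly set" where
  "W K E m = {F. \<exists>S c. finite S \<and> S \<subseteq> admissible E K m \<and>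
                     F = (\<Sum>K'\<in>S. cconst (c K') * H E K')}"

definition mdeg :: "(nat \<Rightarrow>\<^sub>0 nat) \<Rightarrow> nat" where
  "mdeg K = (\<Sum>i\<in>Poly_Mapping.keys K. Poly_Mapping.lookup K i)"

definition mfact :: "(nat \<Rightarrow>\<^sub>0 nat) \<Rightarrow> nat" where
  "mfact K = (\<Prod>i\<in>Poly_Mapping.keys K. fact (Poly_Mapping.lookup K i))"

definition ip :: "nat \<Rightarrow> cpoly \<Rightarrow> cpoly \<Rightarrow> complex" where
  "ip m f g = (\<Sum>K\<in>{K\<in>Poly_Mapping.keys f. mdeg K = m}.
       of_nat (mfact K) * Poly_Mapping.lookup f K * cnj (Poly_Mapping.lookup g K))"

end

theory Submission
  imports Defs
begin

abbreviation lk where "lk \<equiv> Poly_Mapping.lookup"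
abbreviation sg where "sg \<equiv> Poly_Mapping.single"
abbreviation u :: "nat \<Rightarrow> nat \<Rightarrow>\<^sub>0 nat" where "u a \<equiv> Poly_Mapping.single a 1"

definition dv :: "nat \<Rightarrow> cpoly \<Rightarrow> cpoly" where
  "dv a p = Abs_poly_mapping (\<lambda>k. of_nat (lk k a + 1) * lk p (k + u a))"

lemma lookup_dv: "lk (dv a p) k = of_nat (lk k a + 1) * lk p (k + u a)"
proof -
  have "{k. of_nat (lk k a + 1) * lk p (k + u a) \<noteq> (0::complex)} \<subseteq> (\<lambda>k. k - u a) ` Poly_Mapping.keys p"
  proof
    fix k assume "k \<in> {k. of_nat (lk k a + 1) * lk p (k + u a) \<noteq> (0::complex)}"
    then have "k + u a \<in> Poly_Mapping.keys p" by (auto simp: in_keys_iff)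
    moreover have "k = (k + u a) - u a" by simp
    ultimately show "k \<in> (\<lambda>k. k - u a) ` Poly_Mapping.keys p" by blast
  qed
  then have "finite {k. of_nat (lk k a + 1) * lk p (k + u a) \<noteq> (0::complex)}"
    by (rule finite_subset) simp
  then show ?thesis unfolding dv_def by simp
qed

lemma lk_u: "lk (u a) i = (if i = a then 1 else 0)"
  by (simp add: lookup_single when_def)

lemma sub_add_u: "lk m a > 0 \<Longrightarrow> m - u a + u a = m"
  by (rule poly_mapping_eqI) (auto simp: lookup_add lookup_minus lookup_single when_def)

lemma dv_single: "dv a (sg m c) = sg (m - u a) (of_nat (lk m a) * c)"
proof (rule poly_mapping_eqI)
  fix k
  show "lk (dv a (sg m c)) k = lk (sg (m - u a) (of_nat (lk m a) * c)) k"
  proof (cases "m = k + u a")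
    case True
    then show ?thesis by (simp add: lookup_dv lookup_add lk_u)
  next
    case False
    have "lk (sg (m - u a) (of_nat (lk m a) * c)) k = 0"
    proof (cases "lk m a > 0")
      case True
      then have "m - u a \<noteq> k" using False sub_add_u by force
      then show ?thesis by (simp add: lookup_single when_def)
    next
      case False then show ?thesis by (simp add: lookup_single when_def)
    qed
    then show ?thesis using False by (simp add: lookup_dv lookup_single when_def)
  qed
qed

lemma dv_add: "dv a (p + q) = dv a p + dv a q"
  by (rule poly_mapping_eqI) (simp add: lookup_dv lookup_add algebra_simps)
lemma dv_diff: "dv a (p - q) = dv a p - dv a q"
  by (rule poly_mapping_eqI) (simp add: lookup_dv lookup_minus algebra_simps)
lemma dv_zero: "dv a 0 = 0"
  by (rule poly_mapping_eqI) (simp add: lookup_dv)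
lemma dv_sum: "dv a (sum f A) = (\<Sum>x\<in>A. dv a (f x))"
  by (rule poly_mapping_eqI) (simp add: lookup_dv lookup_sum sum_distrib_left)

lemma poly_expand: "(p::cpoly) = (\<Sum>k\<in>Poly_Mapping.keys p. sg k (lk p k))"
proof (rule poly_mapping_eqI)
  fix k
  have "(\<Sum>x\<in>Poly_Mapping.keys p. lk (sg x (lk p x)) k) = (\<Sum>x\<in>Poly_Mapping.keys p. if x = k then lk p k else 0)"
    by (rule sum.cong) (auto simp: lookup_single when_def)
  also have "\<dots> = lk p k" by (simp add: in_keys_iff)
  finally show "lk p k = lk (\<Sum>k\<in>Poly_Mapping.keys p. sg k (lk p k)) k"
    by (simp add: lookup_sum)
qed

lemma sub_add_comm: "lk m a > 0 \<Longrightarrow> m - u a + m' = m + m' - u a"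
  by (rule poly_mapping_eqI) (auto simp: lookup_add lookup_minus lookup_single when_def)

lemma leib_single: "dv a (sg m c * sg m' c') = dv a (sg m c) * sg m' c' + sg m c * dv a (sg m' c')"
proof -
  have l: "lk (m + m') a = lk m a + lk m' a" by (simp add: lookup_add)
  show ?thesis
  proof (cases "lk m a > 0")
    case True
    note T = True
    show ?thesis
    proof (cases "lk m' a > 0")
      case True
      have e1: "m - u a + m' = m + m' - u a" using T by (rule sub_add_comm)
      have e2: "m + (m' - u a) = m + m' - u a" using True sub_add_comm[of m' a m] by (simp add: add.commute)
      show ?thesis using e1 e2 l by (simp add: mult_single dv_single single_add[symmetric] algebra_simps)
    next
      case False
      have e1: "m - u a + m' = m + m' - u a" using T by (rule sub_add_comm)
      show ?thesis using e1 l False by (simp add: mult_single dv_single ac_simps)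
    qed
  next
    case False
    note F = False
    show ?thesis
    proof (cases "lk m' a > 0")
      case True
      have e2: "m + (m' - u a) = m + m' - u a" using True sub_add_comm[of m' a m] by (simp add: add.commute)
      show ?thesis using e2 l F by (simp add: mult_single dv_single ac_simps)
    next
      case False
      show ?thesis using l F False by (simp add: mult_single dv_single)
    qed
  qed
qed

lemma leibniz: "dv a (p * q) = dv a p * q + p * dv a (q::cpoly)"
proof -
  let ?P = "Poly_Mapping.keys p" and ?Q = "Poly_Mapping.keys q"
  have "p * q = (\<Sum>k\<in>?P. sg k (lk p k)) * (\<Sum>l\<in>?Q. sg l (lk q l))"
    using poly_expand[of p] poly_expand[of q] by simp
  also have "\<dots> = (\<Sum>k\<in>?P. \<Sum>l\<in>?Q. sg k (lk p k) * sg l (lk q l))"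
    by (simp add: sum_product)
  finally have pq: "p * q = \<dots>" .
  have "dv a (p * q) = (\<Sum>k\<in>?P. \<Sum>l\<in>?Q. dv a (sg k (lk p k)) * sg l (lk q l) + sg k (lk p k) * dv a (sg l (lk q l)))"
    by (simp add: pq dv_sum leib_single)
  also have "\<dots> = (\<Sum>k\<in>?P. dv a (sg k (lk p k))) * (\<Sum>l\<in>?Q. sg l (lk q l)) + (\<Sum>k\<in>?P. sg k (lk p k)) * (\<Sum>l\<in>?Q. dv a (sg l (lk q l)))"
    by (simp add: sum.distrib sum_product)
  also have "\<dots> = dv a p * q + p * dv a q"
    using poly_expand[of p] poly_expand[of q] by (simp add: dv_sum[symmetric])
  finally show ?thesis .
qed


lemma cconst_add: "cconst (x + y) = cconst x + cconst y"
  by (simp add: cconst_def single_add)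
lemma cconst_mult: "cconst (x * y) = cconst x * cconst y"
  by (simp add: cconst_def mult_single)
lemma cconst_diff: "cconst (x - y) = cconst x - cconst y"
  by (simp add: cconst_def single_diff)
lemma cconst_one: "cconst 1 = 1"
  by (simp add: cconst_def)
lemma cconst_zero: "cconst 0 = 0"
  by (simp add: cconst_def)
lemma cconst_of_nat: "(of_nat k :: cpoly) = cconst (of_nat k)"
  by (simp add: cconst_def)

lemma dv_cconst: "dv a (cconst c) = 0"
  by (simp add: cconst_def dv_single)

lemma dv_Xv: "dv a (Xv i) = cconst (if i = a then 1 else 0)"
  by (auto simp: Xv_def dv_single cconst_def lookup_single when_def)

lemma dv_cmul: "dv a (cconst c * p) = cconst c * dv a p"
  by (simp add: leibniz dv_cconst)

lemma dv_power: "dv a (p ^ k) = of_nat k * p ^ (k - 1) * dv a p"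
proof (induction k)
  case 0
  then show ?case by (simp add: dv_cconst cconst_one[symmetric])
next
  case (Suc k)
  show ?case
  proof (cases k)
    case 0 then show ?thesis by simp
  next
    case (Suc j)
    then show ?thesis using Suc.IH by (simp add: leibniz algebra_simps)
  qed
qed

lemma dv_prod: "finite A \<Longrightarrow> dv a (\<Prod>e\<in>A. f e) = (\<Sum>e\<in>A. dv a (f e) * (\<Prod>e'\<in>A-{e}. f e'))"
proof (induction A rule: finite_induct)
  case empty
  then show ?case by (simp add: dv_cconst cconst_one[symmetric])
next
  case (insert x F)
  have "(\<Sum>e\<in>insert x F. dv a (f e) * (\<Prod>e'\<in>insert x F-{e}. f e'))
     = dv a (f x) * (\<Prod>e'\<in>F. f e') + (\<Sum>e\<in>F. dv a (f e) * (\<Prod>e'\<in>insert x F-{e}. f e'))"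
    using insert by (simp add: insert_Diff_if)
  also have "(\<Sum>e\<in>F. dv a (f e) * (\<Prod>e'\<in>insert x F-{e}. f e')) = (\<Sum>e\<in>F. f x * (dv a (f e) * (\<Prod>e'\<in>F-{e}. f e')))"
  proof (rule sum.cong)
    fix e assume "e \<in> F"
    then have "insert x F - {e} = insert x (F - {e})" "x \<notin> F - {e}" using insert by auto
    then show "dv a (f e) * (\<Prod>e'\<in>insert x F-{e}. f e') = f x * (dv a (f e) * (\<Prod>e'\<in>F-{e}. f e'))"
      using insert by (simp add: ac_simps)
  qed simp
  finally show ?case using insert by (simp add: leibniz sum_distrib_left)
qed

definition L :: "nat set \<Rightarrow> cpoly" where "L e = Xv (Min e) + Xv (Max e)"

definition al :: "nat \<Rightarrow> nat set \<Rightarrow> complex" where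
  "al a e = (if Min e = a then 1 else 0) + (if Max e = a then 1 else 0)"

lemma dv_L: "dv a (L e) = cconst (al a e)"
  by (simp add: L_def al_def dv_add dv_Xv cconst_add)

lemma H_L: "H E K' = (\<Prod>e\<in>E. L e ^ K' e)"
  by (simp add: H_def L_def)

lemma H_upd: "finite E \<Longrightarrow> e \<in> E \<Longrightarrow>
   H E (K'(e := K' e - 1)) = L e ^ (K' e - 1) * (\<Prod>e'\<in>E-{e}. L e' ^ K' e')"
  by (simp add: H_L prod.remove)

lemma dv_H: "finite E \<Longrightarrow> dv a (H E K') = (\<Sum>e\<in>E. cconst (of_nat (K' e) * al a e) * H E (K'(e := K' e - 1)))"
  unfolding H_L[of E K']
  apply (simp add: dv_prod dv_power dv_L)
  apply (rule sum.cong, simp)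
  apply (simp add: cconst_mult cconst_of_nat ac_simps)
  using H_upd[of E _ K'] by simp


lemma W_zero: "0 \<in> W K E m"
  unfolding W_def by (rule CollectI, rule exI[of _ "{}"]) auto

lemma W_add: assumes "F \<in> W K E m" "G \<in> W K E m" shows "F + G \<in> W K E m"
proof -
  obtain S c where S: "finite S" "S \<subseteq> admissible E K m" "F = (\<Sum>K'\<in>S. cconst (c K') * H E K')"
    using assms(1) unfolding W_def by blast
  obtain T d where T: "finite T" "T \<subseteq> admissible E K m" "G = (\<Sum>K'\<in>T. cconst (d K') * H E K')"
    using assms(2) unfolding W_def by blast
  define c' where "c' K' = (if K' \<in> S then c K' else 0) + (if K' \<in> T then d K' else 0)" for K'
  have "F = (\<Sum>K'\<in>S \<union> T. cconst (if K' \<in> S then c K' else 0) * H E K')"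
    unfolding S(3) by (rule sum.mono_neutral_cong_left) (use S T in \<open>auto simp: cconst_zero\<close>)
  moreover have "G = (\<Sum>K'\<in>S \<union> T. cconst (if K' \<in> T then d K' else 0) * H E K')"
    unfolding T(3) by (rule sum.mono_neutral_cong_left) (use S T in \<open>auto simp: cconst_zero\<close>)
  ultimately have "F + G = (\<Sum>K'\<in>S \<union> T. cconst (if K' \<in> S then c K' else 0) * H E K' + cconst (if K' \<in> T then d K' else 0) * H E K')"
    by (simp only: sum.distrib)
  also have "\<dots> = (\<Sum>K'\<in>S \<union> T. cconst (c' K') * H E K')"
    by (rule sum.cong) (simp_all only: c'_def cconst_add distrib_right)
  finally have "F + G = (\<Sum>K'\<in>S \<union> T. cconst (c' K') * H E K')" .
  then show ?thesis unfolding W_def using S T by blast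
qed

lemma W_cmul: assumes "F \<in> W K E m" shows "cconst a * F \<in> W K E m"
proof -
  obtain S c where S: "finite S" "S \<subseteq> admissible E K m" "F = (\<Sum>K'\<in>S. cconst (c K') * H E K')"
    using assms(1) unfolding W_def by blast
  have "cconst a * F = (\<Sum>K'\<in>S. cconst (a * c K') * H E K')"
    unfolding S(3) sum_distrib_left by (rule sum.cong) (simp_all only: cconst_mult mult.assoc)
  then show ?thesis unfolding W_def using S(1,2) by (intro CollectI exI[of _ S] exI[of _ "\<lambda>K'. a * c K'"] conjI)
qed

lemma W_H: "K' \<in> admissible E K m \<Longrightarrow> H E K' \<in> W K E m"
  unfolding W_def by (rule CollectI, rule exI[of _ "{K'}"], rule exI[of _ "\<lambda>_. 1"]) (simp add: cconst_one)

lemma W_sum: "finite I \<Longrightarrow> (\<And>i. i \<in> I \<Longrightarrow> f i \<in> W K E m) \<Longrightarrow> sum f I \<in> W K E m"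
  by (induction I rule: finite_induct) (auto simp: W_zero W_add)

lemma adm_dec: assumes "finite E" "K' \<in> admissible E K m" "e \<in> E" "K' e > 0"
  shows "K'(e := K' e - 1) \<in> admissible E K (m - 1)"
proof -
  have s: "(\<Sum>e\<in>E. K' e) = m" and le: "\<forall>e\<in>E. K' e \<le> K e" and z: "\<forall>e. e \<notin> E \<longrightarrow> K' e = 0"
    using assms(2) unfolding admissible_def by auto
  have "(\<Sum>x\<in>E. (K'(e := K' e - 1)) x) = (K' e - 1) + (\<Sum>x\<in>E-{e}. K' x)"
    using assms by (simp add: sum.remove)
  moreover have "m = K' e + (\<Sum>x\<in>E-{e}. K' x)" using s assms by (simp add: sum.remove)
  ultimately have sm: "(\<Sum>x\<in>E. (K'(e := K' e - 1)) x) = m - 1" using assms(4) by simp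
  have "\<forall>x. x \<notin> E \<longrightarrow> (K'(e := K' e - 1)) x = 0" using z assms(3) by auto
  moreover have "\<forall>x\<in>E. (K'(e := K' e - 1)) x \<le> K x"
  proof
    fix x assume "x \<in> E" then show "(K'(e := K' e - 1)) x \<le> K x"
      using le by (cases "x = e") (auto intro: le_trans[of _ "K' e"])
  qed
  ultimately show ?thesis unfolding admissible_def using sm by blast
qed

definition Dl :: "nat \<Rightarrow> nat \<Rightarrow> cpoly \<Rightarrow> cpoly" where "Dl a b F = dv a F - dv b F"

lemma Dl_H: assumes "finite E" "K' \<in> admissible E K m" shows "Dl a b (H E K') \<in> W K E (m - 1)"
proof -
  have "Dl a b (H E K') = (\<Sum>e\<in>E. cconst (of_nat (K' e) * al a e) * H E (K'(e := K' e - 1)) - cconst (of_nat (K' e) * al b e) * H E (K'(e := K' e - 1)))"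
    unfolding Dl_def dv_H[OF assms(1)] by (rule sum_subtractf[symmetric])
  also have "\<dots> = (\<Sum>e\<in>E. cconst (of_nat (K' e) * (al a e - al b e)) * H E (K'(e := K' e - 1)))"
    by (rule sum.cong) (simp_all only: right_diff_distrib cconst_diff left_diff_distrib)
  also have "\<dots> \<in> W K E (m - 1)"
  proof (rule W_sum[OF assms(1)])
    fix e assume e: "e \<in> E"
    show "cconst (of_nat (K' e) * (al a e - al b e)) * H E (K'(e := K' e - 1)) \<in> W K E (m - 1)"
    proof (cases "K' e > 0")
      case True
      then show ?thesis using adm_dec[OF assms(1,2) e True] by (intro W_cmul W_H)
    next
      case False
      then show ?thesis by (simp add: cconst_zero W_zero)
    qed
  qed
  finally show ?thesis .
qed

lemma Dl_W: assumes "finite E" "F \<in> W K E m" shows "Dl a b F \<in> W K E (m - 1)"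
proof -
  obtain S c where S: "finite S" "S \<subseteq> admissible E K m" "F = (\<Sum>K'\<in>S. cconst (c K') * H E K')"
    using assms(2) unfolding W_def by blast
  have "Dl a b F = (\<Sum>K'\<in>S. cconst (c K') * Dl a b (H E K'))"
    unfolding S(3) Dl_def dv_sum dv_cmul by (simp add: sum_subtractf[symmetric] right_diff_distrib)
  also have "\<dots> \<in> W K E (m - 1)"
    by (rule W_sum[OF S(1)], rule W_cmul, rule Dl_H[OF assms(1)]) (use S(2) in blast)
  finally show ?thesis .
qed


lemma ip_alt: assumes "finite T" "Poly_Mapping.keys f \<subseteq> T"
  shows "ip m f g = (\<Sum>k\<in>T. if mdeg k = m then of_nat (mfact k) * lk f k * cnj (lk g k) else 0)"
proof -
  have "ip m f g = (\<Sum>k\<in>{k\<in>T. mdeg k = m}. of_nat (mfact k) * lk f k * cnj (lk g k))"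
    unfolding ip_def
    by (rule sum.mono_neutral_left) (use assms in \<open>auto simp: in_keys_iff\<close>)
  also have "\<dots> = (\<Sum>k\<in>T. if mdeg k = m then of_nat (mfact k) * lk f k * cnj (lk g k) else 0)"
    using assms(1) by (simp add: sum.inter_filter)
  finally show ?thesis .
qed

lemma ip_diff1: "ip m (f - h) g = ip m f g - ip m h g"
proof -
  let ?T = "Poly_Mapping.keys f \<union> Poly_Mapping.keys h"
  have "Poly_Mapping.keys (f - h) \<subseteq> ?T" by (rule Poly_Mapping.keys_diff)
  then have "ip m (f - h) g = (\<Sum>k\<in>?T. if mdeg k = m then of_nat (mfact k) * lk (f - h) k * cnj (lk g k) else 0)"
    by (simp add: ip_alt[of ?T])
  also have "\<dots> = (\<Sum>k\<in>?T. (if mdeg k = m then of_nat (mfact k) * lk f k * cnj (lk g k) else 0)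
       - (if mdeg k = m then of_nat (mfact k) * lk h k * cnj (lk g k) else 0))"
    by (rule sum.cong) (auto simp: lookup_minus algebra_simps)
  also have "\<dots> = ip m f g - ip m h g"
    by (simp add: sum_subtractf ip_alt[of ?T])
  finally show ?thesis .
qed

lemma ip_diff2: "ip m f (g - h) = ip m f g - ip m f h"
  by (simp add: ip_def lookup_minus sum_subtractf[symmetric] algebra_simps)

lemma mdeg_alt: "finite S \<Longrightarrow> Poly_Mapping.keys k \<subseteq> S \<Longrightarrow> mdeg k = (\<Sum>i\<in>S. lk k i)"
  unfolding mdeg_def by (rule sum.mono_neutral_left) (auto simp: in_keys_iff)

lemma mfact_alt: "finite S \<Longrightarrow> Poly_Mapping.keys k \<subseteq> S \<Longrightarrow> mfact k = (\<Prod>i\<in>S. fact (lk k i))"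
  unfolding mfact_def by (rule prod.mono_neutral_left) (auto simp: in_keys_iff)

lemma keys_sub_u: "Poly_Mapping.keys (k - u a) \<subseteq> Poly_Mapping.keys k"
  by (auto simp: in_keys_iff lookup_minus)

lemma mdeg_sub: assumes "lk k a > 0" shows "mdeg k = mdeg (k - u a) + 1"
proof -
  let ?S = "Poly_Mapping.keys k"
  have a: "a \<in> ?S" using assms by (simp add: in_keys_iff)
  have "mdeg k = lk k a + (\<Sum>i\<in>?S-{a}. lk k i)"
    using a by (simp add: mdeg_alt[of ?S] sum.remove)
  moreover have "mdeg (k - u a) = lk (k - u a) a + (\<Sum>i\<in>?S-{a}. lk (k - u a) i)"
    using a keys_sub_u[of k a] by (simp add: mdeg_alt[of ?S] sum.remove)
  moreover have "(\<Sum>i\<in>?S-{a}. lk (k - u a) i) = (\<Sum>i\<in>?S-{a}. lk k i)"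
    by (rule sum.cong) (auto simp: lookup_minus lookup_single when_def)
  ultimately show ?thesis using assms by (simp add: lookup_minus)
qed

lemma mfact_sub: assumes "lk k a > 0" shows "mfact k = mfact (k - u a) * lk k a"
proof -
  let ?S = "Poly_Mapping.keys k"
  have a: "a \<in> ?S" using assms by (simp add: in_keys_iff)
  have "mfact k = fact (lk k a) * (\<Prod>i\<in>?S-{a}. fact (lk k i))"
    using a by (simp add: mfact_alt[of ?S] prod.remove)
  moreover have "mfact (k - u a) = fact (lk (k - u a) a) * (\<Prod>i\<in>?S-{a}. fact (lk (k - u a) i))"
    using a keys_sub_u[of k a] by (simp add: mfact_alt[of ?S] prod.remove)
  moreover have "(\<Prod>i\<in>?S-{a}. fact (lk (k - u a) i)) = (\<Prod>i\<in>?S-{a}. fact (lk k i) :: nat)"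
    by (rule prod.cong) (auto simp: lookup_minus lookup_single when_def)
  moreover have "fact (lk k a) = fact (lk k a - 1) * (lk k a :: nat)"
    using assms by (cases "lk k a") (auto simp: mult.commute)
  ultimately show ?thesis using assms by (simp add: lookup_minus)
qed

lemma lk_mult_X: "lk (G * Xv a) k = (if lk k a > 0 then lk G (k - u a) else 0)"
proof -
  have "G * Xv a = (\<Sum>l\<in>Poly_Mapping.keys G. sg (l + u a) (lk G l))"
    by (subst poly_expand[of G]) (simp add: Xv_def sum_distrib_right mult_single)
  then have "lk (G * Xv a) k = (\<Sum>l\<in>Poly_Mapping.keys G. if l + u a = k then lk G l else 0)"
    by (simp add: lookup_sum lookup_single when_def)
  also have "\<dots> = (if lk k a > 0 then lk G (k - u a) else 0)"
  proof (cases "lk k a > 0")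
    case True
    have "(\<Sum>l\<in>Poly_Mapping.keys G. if l + u a = k then lk G l else 0)
        = (\<Sum>l\<in>Poly_Mapping.keys G. if l = k - u a then lk G l else 0)"
      by (rule sum.cong) (use True sub_add_u[of k a] in auto)
    also have "\<dots> = lk G (k - u a)" by (simp add: in_keys_iff)
    finally show ?thesis using True by simp
  next
    case False
    have "\<And>l. l + u a \<noteq> k"
    proof
      fix l assume "l + u a = k"
      then have "lk k a = lk l a + 1" by (auto simp: lookup_add)
      then show False using False by simp
    qed
    then show ?thesis using False by simp
  qed
  finally show ?thesis .
qed


lemma fischer: assumes "m \<ge> 1" shows "ip m F (G * Xv a) = ip (m - 1) (dv a F) G"
proof -
  define A where "A = {k\<in>Poly_Mapping.keys F. lk k a > 0}"
  have fA: "finite A" unfolding A_def by simp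
  have "ip m F (G * Xv a) = (\<Sum>k\<in>Poly_Mapping.keys F. if mdeg k = m then of_nat (mfact k) * lk F k * cnj (lk (G * Xv a) k) else 0)"
    by (rule ip_alt) auto
  also have "\<dots> = (\<Sum>k\<in>A. if mdeg k = m then of_nat (mfact k) * lk F k * cnj (lk G (k - u a)) else 0)"
    by (rule sum.mono_neutral_cong_right) (auto simp: A_def lk_mult_X)
  finally have L: "ip m F (G * Xv a) = \<dots>" .
  have inj: "inj_on (\<lambda>k. k - u a) A"
  proof
    fix x y assume xy: "x \<in> A" "y \<in> A" "x - u a = y - u a"
    have "x = x - u a + u a" using sub_add_u[of x a] xy(1) by (simp add: A_def)
    also have "\<dots> = y - u a + u a" using xy(3) by simp
    also have "\<dots> = y" using sub_add_u[of y a] xy(2) by (simp add: A_def)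
    finally show "x = y" .
  qed
  have keys: "Poly_Mapping.keys (dv a F) \<subseteq> (\<lambda>k. k - u a) ` A"
  proof
    fix k assume "k \<in> Poly_Mapping.keys (dv a F)"
    then have "lk F (k + u a) \<noteq> 0" by (auto simp: in_keys_iff lookup_dv)
    then have "k + u a \<in> A" unfolding A_def by (auto simp: in_keys_iff lookup_add)
    moreover have "k = (k + u a) - u a" by simp
    ultimately show "k \<in> (\<lambda>k. k - u a) ` A" by blast
  qed
  have "ip (m - 1) (dv a F) G = (\<Sum>k\<in>(\<lambda>k. k - u a) ` A. if mdeg k = m - 1 then of_nat (mfact k) * lk (dv a F) k * cnj (lk G k) else 0)"
    by (rule ip_alt) (use fA keys in auto)
  also have "\<dots> = (\<Sum>k\<in>A. if mdeg (k - u a) = m - 1 then of_nat (mfact (k - u a)) * lk (dv a F) (k - u a) * cnj (lk G (k - u a)) else 0)"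
    unfolding sum.reindex[OF inj] comp_def by (rule refl)
  also have "\<dots> = (\<Sum>k\<in>A. if mdeg k = m then of_nat (mfact k) * lk F k * cnj (lk G (k - u a)) else 0)"
  proof (rule sum.cong)
    fix k assume "k \<in> A"
    then have pos: "lk k a > 0" unfolding A_def by simp
    have d: "lk (dv a F) (k - u a) = of_nat (lk k a) * lk F k"
      using pos sub_add_u[of k a] by (simp add: lookup_dv lookup_minus)
    have md: "(mdeg (k - u a) = m - 1) = (mdeg k = m)" using mdeg_sub[OF pos] assms by auto
    show "(if mdeg (k - u a) = m - 1 then of_nat (mfact (k - u a)) * lk (dv a F) (k - u a) * cnj (lk G (k - u a)) else 0)
        = (if mdeg k = m then of_nat (mfact k) * lk F k * cnj (lk G (k - u a)) else 0)"
      unfolding md d mfact_sub[OF pos] by simp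
  qed simp
  finally show ?thesis using L by simp
qed

lemma step: assumes "finite E" "m \<ge> 1" "F \<in> W K E m" "ip m F (G * (Xv a - Xv b)) \<noteq> 0"
  shows "\<exists>F'\<in>W K E (m - 1). ip (m - 1) F' G \<noteq> 0"
proof
  show "Dl a b F \<in> W K E (m - 1)" by (rule Dl_W[OF assms(1,3)])
  have "ip (m - 1) (Dl a b F) G = ip m F (G * Xv a) - ip m F (G * Xv b)"
    by (simp add: Dl_def ip_diff1 fischer[OF assms(2)])
  also have "\<dots> = ip m F (G * (Xv a - Xv b))"
    by (simp add: ip_diff2 right_diff_distrib)
  finally show "ip (m - 1) (Dl a b F) G \<noteq> 0" using assms(4) by simp
qed

lemma gen: assumes "finite D" "finite E"
  shows "F \<in> W K E (card E + card D) \<Longrightarrow> ip (card E + card D) F (Q E * Q D) \<noteq> 0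
     \<Longrightarrow> \<exists>F'\<in>W K E (card E). ip (card E) F' (Q E) \<noteq> 0"
  using assms(1)
proof (induction D arbitrary: F rule: finite_induct)
  case empty
  then show ?case by (auto simp: Q_def)
next
  case (insert d D0)
  have qins: "Q (insert d D0) = (Xv (Min d) - Xv (Max d)) * Q D0"
    using insert(1,2) by (simp add: Q_def)
  have qq: "Q E * Q (insert d D0) = (Q E * Q D0) * (Xv (Min d) - Xv (Max d))"
    unfolding qins by (metis mult.assoc mult.commute)
  have ci: "card E + card (insert d D0) = card E + card D0 + 1" using insert(1,2) by simp
  have "ip (card E + card D0 + 1) F ((Q E * Q D0) * (Xv (Min d) - Xv (Max d))) \<noteq> 0"
    using insert.prems(2) unfolding qq ci .
  moreover have "F \<in> W K E (card E + card D0 + 1)" using insert by simp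
  ultimately have "\<exists>F'\<in>W K E (card E + card D0 + 1 - 1). ip (card E + card D0 + 1 - 1) F' (Q E * Q D0) \<noteq> 0"
    by (intro step[OF assms(2)]) auto
  then obtain F' where "F' \<in> W K E (card E + card D0)" "ip (card E + card D0) F' (Q E * Q D0) \<noteq> 0"
    by auto
  then show ?case using insert.IH by blast
qed

lemma pairs_finite: "finite (pairs n)"
proof -
  have "pairs n \<subseteq> Pow {1..n}" unfolding pairs_def by auto
  then show ?thesis by (rule finite_subset) simp
qed

theorem lemma6p1:
  fixes n :: nat and E E' :: "nat set set" and K :: "nat set \<Rightarrow> nat"
  assumes "E \<subseteq> E'" and "E' \<subseteq> pairs n"
    and "\<exists>F\<in>W K E (card E'). ip (card E') F (Q E') \<noteq> 0"
  shows "\<exists>F'\<in>W K E (card E). ip (card E) F' (Q E) \<noteq> 0"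
proof -
  have fE': "finite E'" using assms(2) pairs_finite finite_subset by blast
  have fE: "finite E" using assms(1) fE' finite_subset by blast
  let ?D = "E' - E"
  have fD: "finite ?D" using fE' by simp
  have c: "card E' = card E + card ?D"
    using card_Diff_subset[OF fE assms(1)] card_mono[OF fE' assms(1)] by simp
  have q: "Q E' = Q E * Q ?D"
  proof -
    have "E' = E \<union> ?D" using assms(1) by blast
    then have "Q E' = Q (E \<union> ?D)" by simp
    also have "\<dots> = Q E * Q ?D" unfolding Q_def by (rule prod.union_disjoint) (use fE fD in auto)
    finally show ?thesis .
  qed
  obtain F where "F \<in> W K E (card E')" "ip (card E') F (Q E') \<noteq> 0" using assms(3) by blast
  then show ?thesis using gen[OF fD fE, of F K] c q by simp
qed

end
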